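(* Either $\liminf_{n\to\infty}\operatorname{Var}(S_n)/n^2>0$, or $\operatorname{Var}(S_n)/n^2\to0$ as $n\to\infty$.
   Context: Let $X_1,X_2,\ldots$ be a sequence of centred, weakly stationary, real random variables with finite second moments, and $S_n=X_1+\cdots+X_n$. *)

theory Defs
  imports "HOL-Probability.Probability"
begin

end

theory Submission imports Defs begin

lemma sq_sum_le_card: "(\<Sum>j\<in>A. f j)\<^sup>2 \<le> real (card A) * (\<Sum>j\<in>A. (f j)\<^sup>2)"
  using Cauchy_Schwarz_ineq_sum[of "\<lambda>_. 1::real" f A] by simp

lemma sq_add_eps: fixes a b e :: real assumes "e > 0"
  shows "(a+b)\<^sup>2 \<le> (1+e)*a\<^sup>2 + (1+1/e)*b\<^sup>2"
proof -
  have "0 \<le> (e*a - b)\<^sup>2 / e" using assms by simp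
  also have "(e*a - b)\<^sup>2 / e = e*a\<^sup>2 - 2*a*b + b\<^sup>2/e" using assms
    by (simp add: power2_eq_square field_simps)
  finally show ?thesis by (simp add: power2_eq_square field_simps)
qed

context prob_space begin

definition L2 :: "('a \<Rightarrow> real) \<Rightarrow> bool" where
  "L2 f \<longleftrightarrow> f \<in> borel_measurable M \<and> integrable M (\<lambda>\<omega>. (f \<omega>)\<^sup>2)"

lemma L2_prod: assumes "L2 f" "L2 g" shows "integrable M (\<lambda>\<omega>. f \<omega> * g \<omega>)"
proof (rule Bochner_Integration.integrable_bound[where f="\<lambda>\<omega>. (f \<omega>)\<^sup>2 + (g \<omega>)\<^sup>2"])
  show "integrable M (\<lambda>\<omega>. (f \<omega>)\<^sup>2 + (g \<omega>)\<^sup>2)" using assms unfolding L2_def by auto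
  show "(\<lambda>\<omega>. f \<omega> * g \<omega>) \<in> borel_measurable M" using assms unfolding L2_def by auto
  show "AE x in M. norm (f x * g x) \<le> norm ((f x)\<^sup>2 + (g x)\<^sup>2)"
  proof (rule AE_I2)
    fix x
    have h1: "2*\<bar>f x\<bar>*\<bar>g x\<bar> \<le> (f x)\<^sup>2 + (g x)\<^sup>2"
      using sum_squares_bound[of "\<bar>f x\<bar>" "\<bar>g x\<bar>"] by simp
    have h2: "0 \<le> \<bar>f x\<bar>*\<bar>g x\<bar>" by simp
    have "\<bar>f x * g x\<bar> \<le> (f x)\<^sup>2 + (g x)\<^sup>2"
      unfolding abs_mult using h1 h2 by linarith
    then show "norm (f x * g x) \<le> norm ((f x)\<^sup>2 + (g x)\<^sup>2)" by simp
  qed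
qed

lemma L2_integrable: assumes "L2 f" shows "integrable M f"
proof (rule Bochner_Integration.integrable_bound[where f="\<lambda>\<omega>. (f \<omega>)\<^sup>2 + 1"])
  show "integrable M (\<lambda>\<omega>. (f \<omega>)\<^sup>2 + 1)" using assms unfolding L2_def by auto
  show "f \<in> borel_measurable M" using assms unfolding L2_def by auto
  show "AE x in M. norm (f x) \<le> norm ((f x)\<^sup>2 + 1)"
  proof (rule AE_I2)
    fix x
    have "2*\<bar>f x\<bar>*1 \<le> \<bar>f x\<bar>\<^sup>2 + 1\<^sup>2" by (rule sum_squares_bound)
    then have "\<bar>f x\<bar> \<le> (f x)\<^sup>2 + 1"
      by simp
    then show "norm (f x) \<le> norm ((f x)\<^sup>2 + 1)" by simp
  qed
qed

lemma L2_sum: assumes "finite A" "\<And>j. j \<in> A \<Longrightarrow> L2 (f j)"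
  shows "L2 (\<lambda>\<omega>. \<Sum>j\<in>A. f j \<omega>)"
  unfolding L2_def
proof
  show meas: "(\<lambda>\<omega>. \<Sum>j\<in>A. f j \<omega>) \<in> borel_measurable M" using assms unfolding L2_def by (intro borel_measurable_sum) auto
  show "integrable M (\<lambda>\<omega>. (\<Sum>j\<in>A. f j \<omega>)\<^sup>2)"
  proof (rule Bochner_Integration.integrable_bound[where f="\<lambda>\<omega>. real (card A) * (\<Sum>j\<in>A. (f j \<omega>)\<^sup>2)"])
    show "integrable M (\<lambda>\<omega>. real (card A) * (\<Sum>j\<in>A. (f j \<omega>)\<^sup>2))"
      using assms unfolding L2_def by auto
    show "(\<lambda>\<omega>. (\<Sum>j\<in>A. f j \<omega>)\<^sup>2) \<in> borel_measurable M" using meas by auto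
    show "AE x in M. norm ((\<Sum>j\<in>A. f j x)\<^sup>2) \<le> norm (real (card A) * (\<Sum>j\<in>A. (f j x)\<^sup>2))"
      using sq_sum_le_card[of "\<lambda>j. f j _" A] by (auto intro!: AE_I2 simp: sum_nonneg)
  qed
qed

lemma sq_sum_expect: assumes "finite A" "\<And>j. j \<in> A \<Longrightarrow> L2 (f j)"
  shows "expectation (\<lambda>\<omega>. (\<Sum>j\<in>A. f j \<omega>)\<^sup>2) = (\<Sum>i\<in>A. \<Sum>j\<in>A. expectation (\<lambda>\<omega>. f i \<omega> * f j \<omega>))"
proof -
  have "(\<lambda>\<omega>. (\<Sum>j\<in>A. f j \<omega>)\<^sup>2) = (\<lambda>\<omega>. \<Sum>i\<in>A. \<Sum>j\<in>A. f i \<omega> * f j \<omega>)"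
    by (simp add: power2_eq_square sum_product)
  then show ?thesis using assms
    by (simp add: Bochner_Integration.integral_sum Bochner_Integration.integrable_sum L2_prod)
qed


end

lemma sum_blocks: "(\<Sum>i=1..(q::nat)*(m::nat). f i) = (\<Sum>j<q. \<Sum>i=j*m+1..j*m+m. (f i :: real))"
proof (induction q)
  case 0 then show ?case by simp
next
  case (Suc q)
  have "(\<Sum>i=1..Suc q*m. f i) = (\<Sum>i=1..q*m + m. f i)" by (simp add: add.commute)
  also have "\<dots> = (\<Sum>i=1..q*m. f i) + (\<Sum>i=q*m+1..q*m+m. f i)"
    by (rule sum.ub_add_nat) simp
  finally show ?case using Suc by simp
qed

theorem mainTheorem6:
  fixes M :: "'a measure" and X :: "nat \<Rightarrow> 'a \<Rightarrow> real"
  assumes "prob_space M"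
    and rv: "\<And>i. i \<ge> 1 \<Longrightarrow> X i \<in> borel_measurable M"
    and int: "\<And>i. i \<ge> 1 \<Longrightarrow> integrable M (X i)"
    and sq: "\<And>i. i \<ge> 1 \<Longrightarrow> integrable M (\<lambda>\<omega>. (X i \<omega>)\<^sup>2)"
    and centred: "\<And>i. i \<ge> 1 \<Longrightarrow> prob_space.expectation M (X i) = 0"
    and stationary: "\<And>i j k. i \<ge> 1 \<Longrightarrow> j \<ge> 1 \<Longrightarrow>
        prob_space.expectation M (\<lambda>\<omega>. X (i + k) \<omega> * X (j + k) \<omega>)
        = prob_space.expectation M (\<lambda>\<omega>. X i \<omega> * X j \<omega>)"
  shows "liminf (\<lambda>n::nat. ereal (prob_space.variance M (\<lambda>\<omega>. \<Sum>i=1..n. X i \<omega>) / (real n)\<^sup>2)) > 0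
     \<or> (\<lambda>n::nat. prob_space.variance M (\<lambda>\<omega>. \<Sum>i=1..n. X i \<omega>) / (real n)\<^sup>2) \<longlonglongrightarrow> 0"
proof -
  interpret prob_space M by fact
  have L2X: "L2 (X i)" if "i \<ge> 1" for i using rv sq that unfolding L2_def by auto
  define c where "c i j = expectation (\<lambda>\<omega>. X i \<omega> * X j \<omega>)" for i j
  define V where "V m = expectation (\<lambda>\<omega>. (\<Sum>i=1..m. X i \<omega>)\<^sup>2)" for m
  have V_eq: "V m = (\<Sum>i=1..m. \<Sum>j=1..m. c i j)" for m
    unfolding V_def c_def by (rule sq_sum_expect) (auto intro: L2X)
  have Vshift: "expectation (\<lambda>\<omega>. (\<Sum>i=k+1..k+m. X i \<omega>)\<^sup>2) = V m" for k m
  proof -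
    have "expectation (\<lambda>\<omega>. (\<Sum>i=k+1..k+m. X i \<omega>)\<^sup>2) = (\<Sum>i=1+k..m+k. \<Sum>j=1+k..m+k. c i j)"
      unfolding c_def by (subst sq_sum_expect) (auto intro: L2X simp: add.commute)
    also have "\<dots> = (\<Sum>i=1..m. \<Sum>j=1..m. c (i+k) (j+k))"
      by (simp only: sum.shift_bounds_cl_nat_ivl)
    also have "\<dots> = (\<Sum>i=1..m. \<Sum>j=1..m. c i j)"
      unfolding c_def by (intro sum.cong refl stationary) auto
    finally show ?thesis using V_eq by simp
  qed
  have diag: "expectation (\<lambda>\<omega>. (X i \<omega>)\<^sup>2) = c 1 1" if "i \<ge> 1" for i
    using stationary[of 1 1 "i - 1"] that unfolding c_def by (simp add: power2_eq_square)
  have V_nonneg: "V m \<ge> 0" for m unfolding V_def by simp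
  have c11: "c 1 1 \<ge> 0" using diag[of 1] by (metis integral_nonneg_AE AE_I2 zero_le_power2 order_refl)
  have var: "variance (\<lambda>\<omega>. \<Sum>i=1..n. X i \<omega>) = V n" for n
  proof -
    have "expectation (\<lambda>\<omega>. \<Sum>i=1..n. X i \<omega>) = 0"
      using int centred by (simp add: Bochner_Integration.integral_sum)
    then show ?thesis unfolding V_def by (rule variance_mean_zero)
  qed
  have main: "V n \<le> (1+e) * (real (n div m) * real (n div m) * V m) + (1+1/e) * (real (n mod m) * real (n mod m) * c 1 1)"
    if "m \<ge> 1" "e > 0" for n m :: nat and e :: real
  proof -
    define q where "q = n div m"
    define r where "r = n mod m"
    define B where "B j \<omega> = (\<Sum>i=j*m+1..j*m+m. X i \<omega>)" for j \<omega>
    define T where "T \<omega> = (\<Sum>j<q. B j \<omega>)" for \<omega>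
    define R where "R \<omega> = (\<Sum>i=q*m+1..q*m+r. X i \<omega>)" for \<omega>
    have n_eq: "n = q*m + r" unfolding q_def r_def by simp
    have S_eq: "(\<Sum>i=1..n. X i \<omega>) = T \<omega> + R \<omega>" for \<omega>
    proof -
      have "(\<Sum>i=1..n. X i \<omega>) = (\<Sum>i=1..q*m. X i \<omega>) + R \<omega>"
        unfolding n_eq R_def by (rule sum.ub_add_nat) simp
      then show ?thesis unfolding T_def B_def using sum_blocks[where q=q and m=m and f="\<lambda>i. X i \<omega>"] by simp
    qed
    have L2B: "L2 (B j)" for j unfolding B_def by (rule L2_sum) (auto intro: L2X)
    have L2T: "L2 T" unfolding T_def by (rule L2_sum) (auto intro: L2B)
    have L2R: "L2 R" unfolding R_def by (rule L2_sum) (auto intro: L2X)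
    have "V n = expectation (\<lambda>\<omega>. (T \<omega> + R \<omega>)\<^sup>2)" unfolding V_def S_eq ..
    also have "\<dots> \<le> expectation (\<lambda>\<omega>. (1+e) * (T \<omega>)\<^sup>2 + (1+1/e) * (R \<omega>)\<^sup>2)"
    proof (rule integral_mono)
      show "integrable M (\<lambda>\<omega>. (T \<omega> + R \<omega>)\<^sup>2)"
        using L2_sum[of "{0::nat,1}" "\<lambda>j. if j = 0 then T else R"] L2T L2R unfolding L2_def by simp
      show "integrable M (\<lambda>\<omega>. (1+e) * (T \<omega>)\<^sup>2 + (1+1/e) * (R \<omega>)\<^sup>2)"
        using L2T L2R unfolding L2_def by auto
      show "(T x + R x)\<^sup>2 \<le> (1+e) * (T x)\<^sup>2 + (1+1/e) * (R x)\<^sup>2" for x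
        by (rule sq_add_eps) fact
    qed
    also have "\<dots> = (1+e) * expectation (\<lambda>\<omega>. (T \<omega>)\<^sup>2) + (1+1/e) * expectation (\<lambda>\<omega>. (R \<omega>)\<^sup>2)"
      using L2T L2R unfolding L2_def by simp
    also have "expectation (\<lambda>\<omega>. (T \<omega>)\<^sup>2) \<le> real q * real q * V m"
    proof -
      have "expectation (\<lambda>\<omega>. (T \<omega>)\<^sup>2) \<le> expectation (\<lambda>\<omega>. real q * (\<Sum>j<q. (B j \<omega>)\<^sup>2))"
      proof (rule integral_mono)
        show "integrable M (\<lambda>\<omega>. (T \<omega>)\<^sup>2)" using L2T unfolding L2_def by simp
        show "integrable M (\<lambda>\<omega>. real q * (\<Sum>j<q. (B j \<omega>)\<^sup>2))" using L2B unfolding L2_def by auto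
        show "(T x)\<^sup>2 \<le> real q * (\<Sum>j<q. (B j x)\<^sup>2)" for x
          unfolding T_def using sq_sum_le_card[of "\<lambda>j. B j x" "{..<q}"] by simp
      qed
      also have "\<dots> = real q * (\<Sum>j<q. expectation (\<lambda>\<omega>. (B j \<omega>)\<^sup>2))"
        using L2B unfolding L2_def by (simp add: Bochner_Integration.integral_sum)
      also have "\<dots> = real q * real q * V m"
        unfolding B_def using Vshift[of "_ * m" m] by simp
      finally show ?thesis .
    qed
    also have "expectation (\<lambda>\<omega>. (R \<omega>)\<^sup>2) \<le> real r * real r * c 1 1"
    proof -
      have "expectation (\<lambda>\<omega>. (R \<omega>)\<^sup>2) \<le> expectation (\<lambda>\<omega>. real r * (\<Sum>i=q*m+1..q*m+r. (X i \<omega>)\<^sup>2))"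
      proof (rule integral_mono)
        show "integrable M (\<lambda>\<omega>. (R \<omega>)\<^sup>2)" using L2R unfolding L2_def by simp
        show "integrable M (\<lambda>\<omega>. real r * (\<Sum>i=q*m+1..q*m+r. (X i \<omega>)\<^sup>2))" using sq by auto
        show "(R x)\<^sup>2 \<le> real r * (\<Sum>i=q*m+1..q*m+r. (X i x)\<^sup>2)" for x
          unfolding R_def using sq_sum_le_card[of "\<lambda>i. X i x" "{q*m+1..q*m+r}"] by simp
      qed
      also have "\<dots> = real r * (\<Sum>i=q*m+1..q*m+r. expectation (\<lambda>\<omega>. (X i \<omega>)\<^sup>2))"
        using sq by (simp add: Bochner_Integration.integral_sum)
      also have "\<dots> = real r * real r * c 1 1"
        using diag by simp
      finally show ?thesis .
    qed
    finally show ?thesis unfolding q_def r_def using that by (simp add: mult_left_mono)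
  qed
  define v where "v n = V n / (real n)\<^sup>2" for n
  have v_nonneg: "v n \<ge> 0" for n unfolding v_def using V_nonneg by simp
  have claimA: "\<exists>N. \<forall>n\<ge>N. v n \<le> v m + d" if m1: "m \<ge> 1" and d: "d > 0" for m d
  proof -
    define e where "e = d / (2*(v m + 1))"
    have vm: "v m \<ge> 0" by (rule v_nonneg)
    have e: "e > 0" using d vm by (simp add: e_def)
    have ev: "e * v m \<le> d/2"
    proof -
      have "e * v m = (d/2) * (v m / (v m + 1))" using vm by (simp add: e_def field_simps)
      also have "\<dots> \<le> (d/2) * 1" using d vm by (intro mult_left_mono) auto
      finally show ?thesis by simp
    qed
    define K where "K = (1+1/e) * (real m * real m * c 1 1)"
    have K: "K \<ge> 0" using e c11 by (simp add: K_def)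
    obtain N :: nat where N: "2*K/d < N" using reals_Archimedean2 by blast
    show ?thesis
    proof (intro exI[of _ "N+1"] allI impI)
      fix n assume nN: "N+1 \<le> n"
      then have n0: "real n > 0" and nN': "real N < real n" by auto
      define q where "q = n div m"
      define r where "r = n mod m"
      have qm: "real q * real m \<le> real n"
        unfolding q_def by (metis div_times_less_eq_dividend of_nat_le_iff of_nat_mult)
      have rm: "real r \<le> real m" unfolding r_def using m1
        by (simp add: order.strict_implies_order)
      have 1: "V n \<le> (1+e)*(real q * real q * V m) + (1+1/e)*(real r * real r * c 1 1)"
        unfolding q_def r_def by (rule main[OF m1 e])
      have 2: "(1+1/e)*(real r * real r * c 1 1) \<le> K"
        unfolding K_def using e c11 rm
        by (intro mult_left_mono mult_right_mono mult_mono) auto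
      have m0: "real m > 0" using m1 by simp
      have 3: "real q * real q * V m \<le> (real n * real n) * v m"
      proof -
        have "real q * real q * V m = (real q * real m) * (real q * real m) * v m"
          using m0 by (simp add: v_def power2_eq_square field_simps)
        also have "\<dots> \<le> (real n * real n) * v m"
          using qm vm by (intro mult_right_mono mult_mono) auto
        finally show ?thesis .
      qed
      have "V n \<le> (1+e)*((real n * real n) * v m) + K"
        using 1 2 3 e by (smt (verit) mult_left_mono)
      then have "v n \<le> ((1+e)*((real n * real n) * v m) + K) / (real n)\<^sup>2"
        unfolding v_def using n0 by (intro divide_right_mono) auto
      also have "\<dots> = (1+e) * v m + K / (real n)\<^sup>2"
        using n0 by (simp add: power2_eq_square field_simps)
      also have "K / (real n)\<^sup>2 \<le> K / real n"
        using n0 K nN by (intro divide_left_mono) (auto simp: power2_eq_square)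
      also have "K / real n \<le> d/2"
      proof -
        have "2*K/d < real n" using N nN' by linarith
        then have "2*K < d * real n" using d by (simp add: field_simps)
        then show ?thesis using n0 by (simp add: field_simps)
      qed
      finally show "v n \<le> v m + d" using ev by (simp add: algebra_simps)
    qed
  qed
  have fun_eq: "variance (\<lambda>\<omega>. \<Sum>i=1..n. X i \<omega>) / (real n)\<^sup>2 = v n" for n
    by (subst var, simp only: v_def)
  have "liminf (\<lambda>n. ereal (v n)) > 0 \<or> v \<longlonglongrightarrow> 0"
  proof (cases "\<exists>\<delta>>0. \<exists>N. \<forall>n\<ge>N. \<delta> \<le> v n")
    case True
    then obtain \<delta> N where \<delta>: "\<delta> > 0" "\<And>n. n \<ge> N \<Longrightarrow> \<delta> \<le> v n" by blast
    have "ereal \<delta> \<le> liminf (\<lambda>n. ereal (v n))"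
      unfolding le_Liminf_iff
    proof (intro allI impI)
      fix y assume y: "y < ereal \<delta>"
      show "eventually (\<lambda>n. y < ereal (v n)) sequentially"
        unfolding eventually_sequentially
      proof (intro exI[of _ N] allI impI)
        fix n assume "n \<ge> N"
        then have "ereal \<delta> \<le> ereal (v n)" using \<delta> by simp
        then show "y < ereal (v n)" using y by (rule order.strict_trans2[rotated])
      qed
    qed
    moreover have "0 < ereal \<delta>" using \<delta> by simp
    ultimately show ?thesis by (intro disjI1) (rule order.strict_trans2)
  next
    case False
    then have F: "\<And>\<delta> N. \<delta> > 0 \<Longrightarrow> \<exists>n\<ge>N. v n < \<delta>" by (meson not_le)
    have "v \<longlonglongrightarrow> 0"
    proof (rule LIMSEQ_I)
      fix r :: real assume r: "r > 0"
      obtain m where m: "m \<ge> 1" "v m < r/2" using F[of "r/2" 1] r by auto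
      obtain N where N: "\<And>n. n \<ge> N \<Longrightarrow> v n \<le> v m + r/2" using claimA[OF m(1), of "r/2"] r by auto
      show "\<exists>no. \<forall>n\<ge>no. norm (v n - 0) < r"
        using N m v_nonneg by (intro exI[of _ N]) force
    qed
    then show ?thesis by blast
  qed
  then show ?thesis by (simp only: fun_eq)
qed

end
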